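(* Let $A\subseteq\Delta^{m-1}\times\Delta^{n-1}$ and let $\mathscr T$ be a triangulation of $A$. Let $i,j,k,l\in[m]$ be distinct, and for each unordered pair $\alpha=(ab)$ of distinct elements of $\{i,j,k,l\}$ let $f_\alpha\in\Delta^{n-1}$, these six elements being pairwise distinct, and assume all points of the circuits below lie in $A$. Suppose that $\mathscr T_{jkl}^{f_{(jk)}f_{(kl)}f_{(lj)}}\subseteq\mathscr T$, $\mathscr T_{kil}^{f_{(ki)}f_{(il)}f_{(lk)}}\subseteq\mathscr T$, and $X_{ijl}^{f_{(ij)}f_{(jl)}f_{(li)}}\setminus\{(e_i,f_{(ij)})\}\in\mathscr T$. Then $\mathscr T$ does not have a flip supported on the circuit $X_{ijk}^{f_{(ij)}f_{(jk)}f_{(ki)}}=\big((X_{ijk}^{f_{(ij)}f_{(jk)}f_{(ki)}})^+,(X_{ijk}^{f_{(ij)}f_{(jk)}f_{(ki)}})^-\big)$.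
   Context: General conventions. For a finite point set $A\subset\mathbb R^d$: a cell is a subset of $A$; a simplex is an affinely independent cell; a face of a cell $C$ is a subset $F\subseteq C$ which is the set of minimizers on $C$ of some linear functional. A triangulation of $A$ is a collection $\mathscr T$ of simplices of $A$, closed under taking faces, such that for all $\sigma,\sigma'\in\mathscr T$, $\mathrm{conv}(\sigma)\cap\mathrm{conv}(\sigma')=\mathrm{conv}(F)$ for a common face $F$ of $\sigma$ and $\sigma'$, and such that $\bigcup_{\sigma\in\mathscr T}\mathrm{conv}(\sigma)=\mathrm{conv}(A)$. A circuit is a minimal affinely dependent subset $X$; it satisfies an affine dependence $\sum_{x\in X}\lambda_x x=0$, $\sum\lambda_x=0$, all $\lambda_x\neq0$, unique up to scaling, which partitions $X=X^+\cup X^-$ into the points with positive and with negative coefficients; writing $X=(X^+,X^-)$ fixes a choice of sign. Set $\mathscr T_X^+:=\{\sigma\subseteq X:X^+\not\subseteq\sigma\}$ and $\mathscr T_X^-:=\{\sigma\subseteq X:X^-\not\subseteq\sigma\}$. For $C\in\mathscr T$, $\mathrm{link}_{\mathscr T}(C):=\{C'\in\mathscr T: C\cap C'=\emptyset,\ C\cup C'\in\mathscr T\}$. A triangulation $\mathscr T$ of $A$ has a flip supported on the circuit $(X^+,X^-)$, $X\subseteq A$, if $\mathscr T_X^+\subseteq\mathscr T$ and all inclusion-maximal elements of $\mathscr T_X^+$ have the same link $\mathscr L$ in $\mathscr T$. $\Delta^{m-1}\times\Delta^{n-1}:=\{(e_a,f):a\in[m],f\in\Delta^{n-1}\}\subset\mathbb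 R^m\times\mathbb R^n$, where $e_1,\dots,e_m$ and $\Delta^{n-1}$ are the standard bases of $\mathbb R^m$ and $\mathbb R^n$. For distinct $i_1,\dots,i_t\in[m]$ and distinct $f_1,\dots,f_t\in\Delta^{n-1}$, $X_{i_1\cdots i_t}^{f_1\cdots f_t}$ is the circuit with affine dependence $(e_{i_1},f_1)-(e_{i_2},f_1)+(e_{i_2},f_2)-(e_{i_3},f_2)+\dots+(e_{i_t},f_t)-(e_{i_1},f_t)=0$, with $+$ and $-$ parts read off from these signs, and $\mathscr T_{i_1\cdots i_t}^{f_1\cdots f_t}:=\mathscr T^+_{X_{i_1\cdots i_t}^{f_1\cdots f_t}}$. *)

theory Defs
  imports "HOL-Analysis.Analysis"
begin

definition is_simplex :: "'a::euclidean_space set \<Rightarrow> bool" where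
  "is_simplex \<sigma> \<longleftrightarrow> \<not> affine_dependent \<sigma>"

definition is_face :: "'a::euclidean_space set \<Rightarrow> 'a set \<Rightarrow> bool" where
  "is_face F C \<longleftrightarrow> F \<subseteq> C \<and>
     (F = {} \<or> (\<exists>u. F = {x \<in> C. \<forall>y \<in> C. u \<bullet> x \<le> u \<bullet> y}))"

definition is_triangulation :: "'a::euclidean_space set \<Rightarrow> 'a set set \<Rightarrow> bool" where
  "is_triangulation A T \<longleftrightarrow>
     (\<forall>\<sigma> \<in> T. \<sigma> \<subseteq> A \<and> is_simplex \<sigma>) \<and>
     (\<forall>\<sigma> \<in> T. \<forall>F. is_face F \<sigma> \<longrightarrow> F \<in> T) \<and>
     (\<forall>\<sigma> \<in> T. \<forall>\<sigma>' \<in> T. \<exists>F. is_face F \<sigma> \<and> is_face F \<sigma>' \<and>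
         convex hull \<sigma> \<inter> convex hull \<sigma>' = convex hull F) \<and>
     (\<Union>\<sigma> \<in> T. convex hull \<sigma>) = convex hull A"

definition T_plus :: "'a set \<Rightarrow> 'a set \<Rightarrow> 'a set set" where
  "T_plus Xp Xm = {\<sigma>. \<sigma> \<subseteq> Xp \<union> Xm \<and> \<not> Xp \<subseteq> \<sigma>}"

definition link :: "'a set set \<Rightarrow> 'a set \<Rightarrow> 'a set set" where
  "link T C = {C' \<in> T. C \<inter> C' = {} \<and> C \<union> C' \<in> T}"

definition has_flip :: "'a set set \<Rightarrow> 'a set \<Rightarrow> 'a set \<Rightarrow> bool" where
  "has_flip T Xp Xm \<longleftrightarrow> T_plus Xp Xm \<subseteq> T \<and>
     (\<exists>L. \<forall>\<sigma> \<in> T_plus Xp Xm.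
        (\<forall>\<tau> \<in> T_plus Xp Xm. \<sigma> \<subseteq> \<tau> \<longrightarrow> \<tau> = \<sigma>) \<longrightarrow> link T \<sigma> = L)"

(* The product of simplices: the point (e_a, f_b) of \<Delta>^{m-1} \<times> \<Delta>^{n-1},
   with [m] = UNIV :: 'm set and \<Delta>^{n-1} = {axis b 1 | b :: 'n} *)
definition pt :: "'m::finite \<Rightarrow> 'n::finite \<Rightarrow> (real^'m) \<times> (real^'n)" where
  "pt a b = (axis a 1, axis b 1)"

definition prod_simplices :: "((real^'m::finite) \<times> (real^'n::finite)) set" where
  "prod_simplices = {pt a b | a b. True}"

(* The circuit X_{i1 i2 i3}^{f1 f2 f3}, with dependence
   (e_i1,f1) - (e_i2,f1) + (e_i2,f2) - (e_i3,f2) + (e_i3,f3) - (e_i1,f3) = 0 *)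
definition circ3_plus :: "'m::finite \<Rightarrow> 'm \<Rightarrow> 'm \<Rightarrow> 'n::finite \<Rightarrow> 'n \<Rightarrow> 'n \<Rightarrow>
    ((real^'m) \<times> (real^'n)) set" where
  "circ3_plus i1 i2 i3 f1 f2 f3 = {pt i1 f1, pt i2 f2, pt i3 f3}"

definition circ3_minus :: "'m::finite \<Rightarrow> 'm \<Rightarrow> 'm \<Rightarrow> 'n::finite \<Rightarrow> 'n \<Rightarrow> 'n \<Rightarrow>
    ((real^'m) \<times> (real^'n)) set" where
  "circ3_minus i1 i2 i3 f1 f2 f3 = {pt i2 f1, pt i3 f2, pt i1 f3}"

definition circ3 :: "'m::finite \<Rightarrow> 'm \<Rightarrow> 'm \<Rightarrow> 'n::finite \<Rightarrow> 'n \<Rightarrow> 'n \<Rightarrow>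
    ((real^'m) \<times> (real^'n)) set" where
  "circ3 i1 i2 i3 f1 f2 f3 = circ3_plus i1 i2 i3 f1 f2 f3 \<union> circ3_minus i1 i2 i3 f1 f2 f3"

end

theory Submission
  imports Defs
begin


lemma uniq_support:
  fixes S :: "'a::euclidean_space set"
  assumes fS: "finite S" and ind: "\<not> affine_dependent S" and ZS: "Z \<subseteq> S" and FS: "F \<subseteq> S"
    and cpos: "\<forall>x\<in>Z. c x > 0" and csum: "sum c Z = 1"
    and zdef: "z = (\<Sum>x\<in>Z. c x *\<^sub>R x)" and zF: "z \<in> convex hull F"
  shows "Z \<subseteq> F"
proof -
  have fF: "finite F" using fS FS finite_subset by blast
  have fZ: "finite Z" using fS ZS finite_subset by blast
  obtain \<mu> where mu: "\<forall>x\<in>F. 0 \<le> \<mu> x" "sum \<mu> F = 1" "(\<Sum>x\<in>F. \<mu> x *\<^sub>R x) = z"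
    using zF convex_hull_finite[OF fF] by auto
  define U where "U x = (if x \<in> Z then c x else 0) - (if x \<in> F then \<mu> x else 0)" for x
  have s1: "sum (\<lambda>x. if x \<in> Z then c x else 0) S = 1"
    using csum ZS fS by (simp add: sum.If_cases Int_absorb1)
  have s2: "sum (\<lambda>x. if x \<in> F then \<mu> x else 0) S = 1"
    using mu FS fS by (simp add: sum.If_cases Int_absorb1)
  have "sum U S = 0" unfolding U_def using s1 s2 by (simp add: sum_subtractf)
  moreover
  have v1: "(\<Sum>x\<in>S. (if x \<in> Z then c x else 0) *\<^sub>R x) = z"
  proof -
    have "(\<Sum>x\<in>S. (if x \<in> Z then c x else 0) *\<^sub>R x) = (\<Sum>x\<in>S. (if x \<in> Z then c x *\<^sub>R x else 0))"
      by (rule sum.cong) auto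
    also have "\<dots> = z" using zdef ZS fS by (simp add: sum.If_cases Int_absorb1)
    finally show ?thesis .
  qed
  have v2: "(\<Sum>x\<in>S. (if x \<in> F then \<mu> x else 0) *\<^sub>R x) = z"
  proof -
    have "(\<Sum>x\<in>S. (if x \<in> F then \<mu> x else 0) *\<^sub>R x) = (\<Sum>x\<in>S. (if x \<in> F then \<mu> x *\<^sub>R x else 0))"
      by (rule sum.cong) auto
    also have "\<dots> = z" using mu FS fS by (simp add: sum.If_cases Int_absorb1)
    finally show ?thesis .
  qed
  have "(\<Sum>x\<in>S. U x *\<^sub>R x) = 0"
    unfolding U_def using v1 v2 by (simp add: scaleR_diff_left sum_subtractf)
  ultimately have U0: "\<forall>v\<in>S. U v = 0"
    using ind affine_dependent_explicit_finite[OF fS] by blast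
  show ?thesis
  proof
    fix x assume xZ: "x \<in> Z"
    show "x \<in> F"
    proof (rule ccontr)
      assume "x \<notin> F"
      then have "U x = c x" using xZ by (simp add: U_def)
      then show False using U0 xZ ZS cpos by fastforce
    qed
  qed
qed



lemma linear_real_inner:
  fixes g :: "'a::euclidean_space \<Rightarrow> real"
  assumes "linear g"
  shows "\<exists>u. \<forall>x. g x = u \<bullet> x"
proof -
  define u where "u = (\<Sum>b\<in>Basis. g b *\<^sub>R b)"
  have "g x = u \<bullet> x" for x
  proof -
    have "g x = g (\<Sum>b\<in>Basis. (x \<bullet> b) *\<^sub>R b)" by (simp add: euclidean_representation)
    also have "\<dots> = (\<Sum>b\<in>Basis. (x \<bullet> b) * g b)"
      using assms by (simp add: linear_sum linear_cmul)
    also have "\<dots> = u \<bullet> x" unfolding u_def by (simp add: inner_sum_right inner_commute mult.commute)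
    finally show ?thesis .
  qed
  then show ?thesis by blast
qed

lemma simplex_subset_face:
  fixes C :: "'a::euclidean_space set"
  assumes fC: "finite C" and ind: "\<not> affine_dependent C" and GC: "G \<subseteq> C"
  shows "is_face G C"
proof (cases "G = {}")
  case True then show ?thesis by (simp add: is_face_def)
next
  case False
  then obtain a where aG: "a \<in> G" by blast
  have aC: "a \<in> C" using aG GC by blast
  define S where "S = C - {a}"
  have CS: "C = insert a S" "a \<notin> S" using aC S_def by auto
  have indep: "\<not> dependent ((\<lambda>x. -a + x) ` S)"
    using ind affine_dependent_iff_dependent[OF CS(2)] CS(1) by simp
  define f where "f y = (if y + a \<in> G then 0 else (1::real))" for y
  obtain g where g: "linear g" "\<forall>y\<in>(\<lambda>x. -a + x) ` S. g y = f y"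
    using linear_independent_extend[OF indep] by blast
  obtain u where u: "\<forall>x. g x = u \<bullet> x" using linear_real_inner[OF g(1)] by blast
  have val: "u \<bullet> x = u \<bullet> a + (if x \<in> G then 0 else 1)" if "x \<in> C" for x
  proof (cases "x = a")
    case True then show ?thesis using aG by simp
  next
    case False
    then have "x \<in> S" using that S_def by simp
    then have "g (-a + x) = f (-a + x)" using g(2) by blast
    then have "u \<bullet> (-a + x) = (if x \<in> G then 0 else 1)" using u f_def by (simp add: algebra_simps)
    then show ?thesis by (auto simp: inner_diff_right split: if_splits)
  qed
  have "G = {x \<in> C. \<forall>y\<in>C. u \<bullet> x \<le> u \<bullet> y}"
  proof (intro set_eqI iffI)
    fix x assume xG: "x \<in> G"
    then have "x \<in> C" using GC by blast
    then show "x \<in> {x \<in> C. \<forall>y\<in>C. u \<bullet> x \<le> u \<bullet> y}" using val xG by auto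
  next
    fix x assume "x \<in> {x \<in> C. \<forall>y\<in>C. u \<bullet> x \<le> u \<bullet> y}"
    then have xC: "x \<in> C" and m: "u \<bullet> x \<le> u \<bullet> a" using aC by auto
    show "x \<in> G"
    proof (rule ccontr)
      assume "x \<notin> G"
      then have "u \<bullet> x = u \<bullet> a + 1" using val xC by simp
      then show False using m by simp
    qed
  qed
  then show ?thesis unfolding is_face_def using GC by blast
qed



lemma triD1: "is_triangulation A T \<Longrightarrow> \<sigma> \<in> T \<Longrightarrow> \<sigma> \<subseteq> A \<and> \<not> affine_dependent \<sigma>"
  by (simp add: is_triangulation_def is_simplex_def)
lemma triD2: "is_triangulation A T \<Longrightarrow> \<sigma> \<in> T \<Longrightarrow> is_face F \<sigma> \<Longrightarrow> F \<in> T"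
  by (simp add: is_triangulation_def)
lemma triD3: "is_triangulation A T \<Longrightarrow> \<sigma> \<in> T \<Longrightarrow> \<sigma>' \<in> T \<Longrightarrow> \<exists>F. is_face F \<sigma> \<and> is_face F \<sigma>' \<and>
         convex hull \<sigma> \<inter> convex hull \<sigma>' = convex hull F"
  by (simp add: is_triangulation_def)
lemma triD4: "is_triangulation A T \<Longrightarrow> (\<Union>\<sigma> \<in> T. convex hull \<sigma>) = convex hull A"
  by (simp add: is_triangulation_def)

lemma tri_basic:
  assumes tri: "is_triangulation A T" and fA: "finite A"
  shows "finite T" and "\<And>\<sigma>. \<sigma> \<in> T \<Longrightarrow> finite \<sigma> \<and> \<sigma> \<subseteq> A \<and> \<not> affine_dependent \<sigma>"
proof -
  have sub: "\<sigma> \<subseteq> A \<and> \<not> affine_dependent \<sigma>" if "\<sigma> \<in> T" for \<sigma>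
    using triD1[OF tri that] .
  then have "T \<subseteq> Pow A" by blast
  then show "finite T" using fA finite_subset by blast
  fix \<sigma> assume "\<sigma> \<in> T"
  then show "finite \<sigma> \<and> \<sigma> \<subseteq> A \<and> \<not> affine_dependent \<sigma>" using sub fA finite_subset by blast
qed

lemma tri_face_closed:
  assumes tri: "is_triangulation A T" and fA: "finite A" and \<rho>: "\<rho> \<in> T" and G: "G \<subseteq> \<rho>"
  shows "G \<in> T"
proof -
  have "finite \<rho>" "\<not> affine_dependent \<rho>" using tri_basic[OF tri fA] \<rho> by auto
  then have "is_face G \<rho>" using simplex_subset_face G by blast
  then show ?thesis using triD2[OF tri \<rho>] by blast
qed

lemma tri_conflict:
  fixes A :: "'a::euclidean_space set"
  assumes tri: "is_triangulation A T" and fA: "finite A"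
    and r1: "\<rho>1 \<in> T" and r2: "\<rho>2 \<in> T" and Zp: "Zp \<subseteq> \<rho>1" and Zm: "Zm \<subseteq> \<rho>2"
    and card: "card Zp = card Zm" and ne: "Zp \<noteq> {}" and disj: "Zp \<inter> Zm = {}"
    and eq: "(\<Sum>x\<in>Zp. x) = (\<Sum>x\<in>Zm. x)"
  shows False
proof -
  have b1: "finite \<rho>1" "\<not> affine_dependent \<rho>1" using tri_basic(2)[OF tri fA r1] by auto
  have b2: "finite \<rho>2" "\<not> affine_dependent \<rho>2" using tri_basic(2)[OF tri fA r2] by auto
  have fZp: "finite Zp" using b1(1) Zp by (rule finite_subset[rotated])
  have fZm: "finite Zm" using b2(1) Zm by (rule finite_subset[rotated])
  define n where "n = card Zp"
  have npos: "n > 0" using fZp ne unfolding n_def by (simp add: card_gt_0_iff)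
  define z where "z = (\<Sum>x\<in>Zp. (1 / real n) *\<^sub>R x)"
  have z2: "z = (\<Sum>x\<in>Zm. (1 / real n) *\<^sub>R x)"
  proof -
    have "z = (1 / real n) *\<^sub>R (\<Sum>x\<in>Zp. x)" unfolding z_def by (rule scaleR_sum_right[symmetric])
    also have "\<dots> = (1 / real n) *\<^sub>R (\<Sum>x\<in>Zm. x)" using eq by simp
    also have "\<dots> = (\<Sum>x\<in>Zm. (1 / real n) *\<^sub>R x)" by (rule scaleR_sum_right)
    finally show ?thesis .
  qed
  have sp: "sum (\<lambda>x. 1 / real n) Zp = 1" using npos n_def by simp
  have sm: "sum (\<lambda>x. 1 / real n) Zm = 1" using npos n_def card by simp
  have "z \<in> convex hull Zp"
    unfolding convex_hull_finite[OF fZp] using sp npos z_def by (intro CollectI exI[of _ "\<lambda>x. 1 / real n"]) simp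
  then have z1h: "z \<in> convex hull \<rho>1" using hull_mono[OF Zp] by blast
  have "z \<in> convex hull Zm"
    unfolding convex_hull_finite[OF fZm] using sm npos z2 by (intro CollectI exI[of _ "\<lambda>x. 1 / real n"]) simp
  then have z2h: "z \<in> convex hull \<rho>2" using hull_mono[OF Zm] by blast
  obtain F where F: "is_face F \<rho>1" "is_face F \<rho>2" "convex hull \<rho>1 \<inter> convex hull \<rho>2 = convex hull F"
    using triD3[OF tri r1 r2] by blast
  have F1: "F \<subseteq> \<rho>1" and F2: "F \<subseteq> \<rho>2" using F unfolding is_face_def by auto
  have zF: "z \<in> convex hull F" using F(3) z1h z2h by blast
  have "Zp \<subseteq> F"
    by (rule uniq_support[OF b1 Zp F1, of "\<lambda>x. 1 / real n" z]) (use npos sp z_def zF in auto)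
  moreover have "Zm \<subseteq> F"
    by (rule uniq_support[OF b2 Zm F2, of "\<lambda>x. 1 / real n" z]) (use npos sm z2 zF in auto)
  ultimately have ZZ: "Zp \<union> Zm \<subseteq> \<rho>1" using F1 by blast
  define U where "U x = (if x \<in> Zp then 1 else if x \<in> Zm then -1 else (0::real))" for x
  have "sum U \<rho>1 = 0"
  proof -
    have "sum U \<rho>1 = sum U (Zp \<union> Zm)"
      by (rule sum.mono_neutral_right[OF b1(1) ZZ]) (auto simp: U_def)
    also have "\<dots> = sum U Zp + sum U Zm" using sum.union_disjoint[OF fZp fZm disj] .
    also have "\<dots> = real (card Zp) - real (card Zm)"
    proof -
      have "sum U Zp = sum (\<lambda>x. 1) Zp" by (rule sum.cong) (auto simp: U_def)
      moreover have "sum U Zm = sum (\<lambda>x. -1) Zm" by (rule sum.cong) (use disj in \<open>auto simp: U_def\<close>)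
      ultimately show ?thesis by simp
    qed
    finally show ?thesis using card by simp
  qed
  moreover obtain v where "v \<in> Zp" using ne by blast
  then have "\<exists>v\<in>\<rho>1. U v \<noteq> 0" using ZZ U_def by auto
  moreover have "(\<Sum>x\<in>\<rho>1. U x *\<^sub>R x) = 0"
  proof -
    have "(\<Sum>x\<in>\<rho>1. U x *\<^sub>R x) = (\<Sum>x\<in>Zp \<union> Zm. U x *\<^sub>R x)"
      by (rule sum.mono_neutral_right[OF b1(1) ZZ]) (auto simp: U_def)
    also have "\<dots> = (\<Sum>x\<in>Zp. U x *\<^sub>R x) + (\<Sum>x\<in>Zm. U x *\<^sub>R x)"
      using sum.union_disjoint[OF fZp fZm disj] .
    also have "\<dots> = (\<Sum>x\<in>Zp. x) - (\<Sum>x\<in>Zm. x)"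
    proof -
      have "(\<Sum>x\<in>Zp. U x *\<^sub>R x) = (\<Sum>x\<in>Zp. x)" by (rule sum.cong) (auto simp: U_def)
      moreover have "(\<Sum>x\<in>Zm. U x *\<^sub>R x) = (\<Sum>x\<in>Zm. - x)" by (rule sum.cong) (use disj in \<open>auto simp: U_def\<close>)
      ultimately show ?thesis by (simp add: sum_negf)
    qed
    finally show ?thesis using eq by simp
  qed
  ultimately have "affine_dependent \<rho>1"
    using affine_dependent_explicit_finite[OF b1(1)] by blast
  then show False using b1 by blast
qed




lemma extension:
  fixes A :: "'a::euclidean_space set"
  assumes tri: "is_triangulation A T" and fA: "finite A" and r0: "\<rho>0 \<in> T" and sub: "\<sigma> \<subseteq> \<rho>0"
    and ne: "\<sigma> \<noteq> {}" and aA: "a \<in> A" and zero: "\<forall>x\<in>\<sigma>. u \<bullet> x = 0" and pos: "u \<bullet> a > 0"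
  shows "\<exists>\<rho>\<in>T. \<sigma> \<subseteq> \<rho> \<and> (\<exists>x\<in>\<rho>. u \<bullet> x > 0)"
proof -
  have b0: "finite \<rho>0 \<and> \<rho>0 \<subseteq> A \<and> \<not> affine_dependent \<rho>0" using tri_basic(2)[OF tri fA r0] .
  have fs: "finite \<sigma>" using b0 sub by (meson finite_subset)
  define n where "n = card \<sigma>"
  have npos: "n > 0" using fs ne unfolding n_def by (simp add: card_gt_0_iff)
  define q where "q = (\<Sum>x\<in>\<sigma>. (1 / real n) *\<^sub>R x)"
  have csum: "sum (\<lambda>x. 1 / real n) \<sigma> = 1" using npos n_def by simp
  have qs: "q \<in> convex hull \<sigma>"
    unfolding convex_hull_finite[OF fs] using csum npos q_def by (intro CollectI exI[of _ "\<lambda>x. 1 / real n"]) simp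
  have q0: "q \<in> convex hull \<rho>0" using qs hull_mono[OF sub] by blast
  have key: "\<sigma> \<subseteq> \<rho>" if r1: "\<rho> \<in> T" and qr: "q \<in> convex hull \<rho>" for \<rho>
  proof -
    obtain F where F: "is_face F \<rho>0" "is_face F \<rho>" "convex hull \<rho>0 \<inter> convex hull \<rho> = convex hull F"
      using triD3[OF tri r0 r1] by blast
    have F1: "F \<subseteq> \<rho>0" and F2: "F \<subseteq> \<rho>" using F unfolding is_face_def by auto
    have qF: "q \<in> convex hull F" using F(3) q0 qr by blast
    have "\<sigma> \<subseteq> F"
      by (rule uniq_support[of \<rho>0 \<sigma> F "\<lambda>x. 1 / real n" q]) (use b0 sub F1 npos csum q_def qF in auto)
    then show ?thesis using F2 by blast
  qed
  have fT: "finite T" using tri_basic(1)[OF tri fA] .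
  define B where "B = (\<Union>\<rho>\<in>{\<rho>\<in>T. \<not> \<sigma> \<subseteq> \<rho>}. convex hull \<rho>)"
  have "closed B" unfolding B_def
  proof (rule closed_UN)
    show "finite {\<rho> \<in> T. \<not> \<sigma> \<subseteq> \<rho>}" using fT by simp
    show "\<forall>x\<in>{\<rho> \<in> T. \<not> \<sigma> \<subseteq> \<rho>}. closed (convex hull x)"
    proof
      fix x assume "x \<in> {\<rho> \<in> T. \<not> \<sigma> \<subseteq> \<rho>}"
      then have "finite x" using tri_basic(2)[OF tri fA] by blast
      then show "closed (convex hull x)" by (simp add: compact_imp_closed finite_imp_compact_convex_hull)
    qed
  qed
  moreover have "q \<notin> B" unfolding B_def using key by blast
  ultimately obtain e where e: "e > 0" "ball q e \<subseteq> - B"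
    using open_contains_ball_eq[of "- B" q] by (auto simp: open_Compl)
  define d where "d = min (1/2) (e / (2 * (norm (a - q) + 1)))"
  have "2 * (norm (a - q) + 1) > 0" by (simp add: add_nonneg_pos)
  then have dpos: "d > 0" using e unfolding d_def by (simp add: divide_pos_pos)
  have d1: "d \<le> 1" by (simp add: d_def)
  have dle: "d \<le> e / (2 * (norm (a - q) + 1))" by (simp add: d_def)
  define y where "y = (1 - d) *\<^sub>R q + d *\<^sub>R a"
  have "norm (y - q) = d * norm (a - q)"
  proof -
    have "y - q = d *\<^sub>R (a - q)" by (simp add: y_def algebra_simps)
    then show ?thesis using dpos by simp
  qed
  also have "\<dots> < e"
  proof -
    have "d * norm (a - q) \<le> e / (2 * (norm (a - q) + 1)) * norm (a - q)"
      using mult_right_mono[OF dle norm_ge_zero[of "a - q"]] .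
    also have "\<dots> < e"
    proof -
      have h: "norm (a - q) < 2 * (norm (a - q) + 1)" proof -
        have "0 \<le> norm (a - q)" by (rule norm_ge_zero)
        then show ?thesis by (smt (verit))
      qed
      have "e / (2 * (norm (a - q) + 1)) * norm (a - q) = e * (norm (a - q) / (2 * (norm (a - q) + 1)))"
        by simp
      also have "\<dots> < e * 1"
      proof (intro mult_strict_left_mono)
        have "0 \<le> norm (a - q)" by (rule norm_ge_zero)
        then have p: "0 < 2 * (norm (a - q) + 1)" by (smt (verit))
        show "norm (a - q) / (2 * (norm (a - q) + 1)) < 1" using h p by (simp add: divide_less_eq)
      qed (use e(1) in simp)
      finally show ?thesis by simp
    qed
    finally show ?thesis .
  qed
  finally have "y \<in> ball q e" by (simp add: dist_norm norm_minus_commute)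
  then have yB: "y \<notin> B" using e(2) by blast
  have sA: "\<sigma> \<subseteq> A" using sub b0 by auto
  have qA: "q \<in> convex hull A" using subsetD[OF hull_mono[OF sA] qs] .
  have aH: "a \<in> convex hull A" using hull_inc[OF aA] .
  have yA: "y \<in> convex hull A"
    unfolding y_def using convexD[OF convex_convex_hull qA aH, of "1 - d" d] dpos d1 by simp
  have "y \<in> (\<Union>\<sigma>\<in>T. convex hull \<sigma>)" using triD4[OF tri] yA by simp
  then obtain \<rho> where \<rho>: "\<rho> \<in> T" "y \<in> convex hull \<rho>" by blast
  have s\<rho>: "\<sigma> \<subseteq> \<rho>"
  proof (rule ccontr)
    assume "\<not> \<sigma> \<subseteq> \<rho>"
    then have "y \<in> B" unfolding B_def using \<rho> by blast
    then show False using yB by simp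
  qed
  have uq: "u \<bullet> q = 0"
    unfolding q_def using zero by (simp add: inner_sum_right)
  have uy: "u \<bullet> y > 0" unfolding y_def using uq pos dpos by (simp add: inner_add_right)
  have "\<exists>x\<in>\<rho>. u \<bullet> x > 0"
  proof (rule ccontr)
    assume "\<not> ?thesis"
    then have "\<rho> \<subseteq> {x. u \<bullet> x \<le> 0}" by (auto simp: not_less)
    then have "convex hull \<rho> \<subseteq> {x. u \<bullet> x \<le> 0}"
      by (rule hull_minimal) (rule convex_halfspace_le)
    then show False using \<rho>(2) uy by auto
  qed
  then show ?thesis using \<rho>(1) s\<rho> by blast
qed




lemma pt_eq[simp]: "pt a b = pt c d \<longleftrightarrow> a = c \<and> b = d"
  by (simp add: pt_def axis_eq_axis)

lemma finite_prod_simplices: "finite (prod_simplices :: ((real^'m::finite) \<times> (real^'n::finite)) set)"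
proof -
  have "prod_simplices = (\<lambda>(a, b). pt a b) ` (UNIV :: ('m \<times> 'n) set)"
    unfolding prod_simplices_def by (auto simp: image_iff)
  moreover have "finite ((\<lambda>(a, b). pt a b) ` (UNIV :: ('m \<times> 'n) set))" by (rule finite_imageI) simp
  ultimately show ?thesis by simp
qed

definition potU :: "'m::finite set \<Rightarrow> 'n::finite set \<Rightarrow> (real^'m) \<times> (real^'n)" where
  "potU R C = ((\<chi> a. if a \<in> R then 1 else 0), (\<chi> b. if b \<in> C then 0 else -1))"

lemma potU_pt: "potU R C \<bullet> pt a b = (if a \<in> R then 1 else 0) + (if b \<in> C then 0 else -1)"
  by (simp add: potU_def pt_def inner_axis)

lemma potU_pos: "potU R C \<bullet> pt a b > 0 \<longleftrightarrow> a \<in> R \<and> b \<in> C"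
  by (simp add: potU_pt)

lemma ext_pt:
  fixes A :: "((real^'m::finite) \<times> (real^'n::finite)) set"
  assumes tri: "is_triangulation A T" and AP: "A \<subseteq> prod_simplices"
    and r0: "\<rho>0 \<in> T" and sub: "\<sigma> \<subseteq> \<rho>0" and ne: "\<sigma> \<noteq> {}"
    and zero: "\<forall>x\<in>\<sigma>. potU R C \<bullet> x = 0" and w: "pt a0 b0 \<in> A" "a0 \<in> R" "b0 \<in> C"
  shows "\<exists>\<rho>\<in>T. \<sigma> \<subseteq> \<rho> \<and> (\<exists>a b. pt a b \<in> \<rho> \<and> a \<in> R \<and> b \<in> C)"
proof -
  have fA: "finite A" using finite_subset[OF AP finite_prod_simplices] .
  have "potU R C \<bullet> pt a0 b0 > 0" using w potU_pos by blast
  from extension[OF tri fA r0 sub ne w(1) zero this]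
  obtain \<rho> x where \<rho>: "\<rho> \<in> T" "\<sigma> \<subseteq> \<rho>" "x \<in> \<rho>" "potU R C \<bullet> x > 0" by blast
  have "x \<in> A" using tri_basic(2)[OF tri fA \<rho>(1)] \<rho>(3) by blast
  then have "x \<in> prod_simplices" using AP by blast
  then obtain a b where x: "x = pt a b" unfolding prod_simplices_def by blast
  then have "a \<in> R \<and> b \<in> C" using \<rho>(4) potU_pos by blast
  then show ?thesis using \<rho> x by blast
qed

lemma sum_pt2: "a1 \<noteq> a2 \<Longrightarrow> pt a1 b1 + pt a2 b2 = pt a1 b2 + pt a2 b1"
  by (simp add: pt_def)

lemma conflict4:
  fixes A :: "((real^'m::finite) \<times> (real^'n::finite)) set"
  assumes tri: "is_triangulation A T" and AP: "A \<subseteq> prod_simplices"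
    and r1: "\<rho>1 \<in> T" and r2: "\<rho>2 \<in> T" and d: "a1 \<noteq> a2" "b1 \<noteq> b2"
    and s1: "pt a1 b1 \<in> \<rho>1" "pt a2 b2 \<in> \<rho>1" and s2: "pt a1 b2 \<in> \<rho>2" "pt a2 b1 \<in> \<rho>2"
  shows False
proof -
  have fA: "finite A" using finite_subset[OF AP finite_prod_simplices] .
  show False
  proof (rule tri_conflict[OF tri fA r1 r2, of "{pt a1 b1, pt a2 b2}" "{pt a1 b2, pt a2 b1}"])
    have "(\<Sum>x\<in>{pt a1 b1, pt a2 b2}. x) = pt a1 b1 + pt a2 b2" using d by simp
    also have "\<dots> = pt a1 b2 + pt a2 b1" by (simp add: pt_def)
    also have "\<dots> = (\<Sum>x\<in>{pt a1 b2, pt a2 b1}. x)" using d by simp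
    finally show "(\<Sum>x\<in>{pt a1 b1, pt a2 b2}. x) = (\<Sum>x\<in>{pt a1 b2, pt a2 b1}. x)" .
  qed (use d s1 s2 in auto)
qed

lemma conflict6:
  fixes A :: "((real^'m::finite) \<times> (real^'n::finite)) set"
  assumes tri: "is_triangulation A T" and AP: "A \<subseteq> prod_simplices"
    and r1: "\<rho>1 \<in> T" and r2: "\<rho>2 \<in> T" and d: "distinct [a1, a2, a3]" "distinct [b1, b2, b3]"
    and s1: "pt a1 b1 \<in> \<rho>1" "pt a2 b2 \<in> \<rho>1" "pt a3 b3 \<in> \<rho>1"
    and s2: "pt a2 b1 \<in> \<rho>2" "pt a3 b2 \<in> \<rho>2" "pt a1 b3 \<in> \<rho>2"
  shows False
proof -
  have fA: "finite A" using finite_subset[OF AP finite_prod_simplices] .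
  show False
  proof (rule tri_conflict[OF tri fA r1 r2, of "{pt a1 b1, pt a2 b2, pt a3 b3}" "{pt a2 b1, pt a3 b2, pt a1 b3}"])
    have "(\<Sum>x\<in>{pt a1 b1, pt a2 b2, pt a3 b3}. x) = pt a1 b1 + pt a2 b2 + pt a3 b3" using d by (simp add: add.assoc)
    also have "\<dots> = pt a2 b1 + pt a3 b2 + pt a1 b3" by (simp add: pt_def algebra_simps)
    also have "\<dots> = (\<Sum>x\<in>{pt a2 b1, pt a3 b2, pt a1 b3}. x)" using d by (simp add: add.assoc)
    finally show "(\<Sum>x\<in>{pt a1 b1, pt a2 b2, pt a3 b3}. x) = (\<Sum>x\<in>{pt a2 b1, pt a3 b2, pt a1 b3}. x)" .
  qed (use d s1 s2 in auto)
qed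




lemma Tplus_max:
  assumes p: "p \<in> Xp"
  shows "(Xp \<union> Xm) - {p} \<in> T_plus Xp Xm"
    and "\<forall>\<tau>\<in>T_plus Xp Xm. (Xp \<union> Xm) - {p} \<subseteq> \<tau> \<longrightarrow> \<tau> = (Xp \<union> Xm) - {p}"
proof -
  show "(Xp \<union> Xm) - {p} \<in> T_plus Xp Xm" using p unfolding T_plus_def by blast
  show "\<forall>\<tau>\<in>T_plus Xp Xm. (Xp \<union> Xm) - {p} \<subseteq> \<tau> \<longrightarrow> \<tau> = (Xp \<union> Xm) - {p}"
  proof (intro ballI impI)
    fix \<tau> assume t: "\<tau> \<in> T_plus Xp Xm" and s: "(Xp \<union> Xm) - {p} \<subseteq> \<tau>"
    have t1: "\<tau> \<subseteq> Xp \<union> Xm" and t2: "\<not> Xp \<subseteq> \<tau>" using t unfolding T_plus_def by auto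
    have "p \<notin> \<tau>"
    proof
      assume "p \<in> \<tau>"
      then have "Xp \<subseteq> \<tau>" using s by blast
      then show False using t2 by blast
    qed
    then show "\<tau> = (Xp \<union> Xm) - {p}" using t1 s by blast
  qed
qed

lemma flip_transfer:
  fixes A :: "'a::euclidean_space set"
  assumes tri: "is_triangulation A T" and fA: "finite A" and hf: "has_flip T Xp Xm"
    and p: "p \<in> Xp" and p': "p' \<in> Xp" and r: "\<rho> \<in> T" and sub: "(Xp \<union> Xm) - {p} \<subseteq> \<rho>"
  shows "((Xp \<union> Xm) - {p'}) \<union> (\<rho> - ((Xp \<union> Xm) - {p})) \<in> T"
proof -
  obtain L where L: "\<forall>\<sigma>\<in>T_plus Xp Xm. (\<forall>\<tau>\<in>T_plus Xp Xm. \<sigma> \<subseteq> \<tau> \<longrightarrow> \<tau> = \<sigma>) \<longrightarrow> link T \<sigma> = L"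
    using hf unfolding has_flip_def by blast
  have l1: "link T ((Xp \<union> Xm) - {p}) = L" using L Tplus_max[OF p] by blast
  have l2: "link T ((Xp \<union> Xm) - {p'}) = L" using L Tplus_max[OF p'] by blast
  define C where "C = \<rho> - ((Xp \<union> Xm) - {p})"
  have CT: "C \<in> T" unfolding C_def by (rule tri_face_closed[OF tri fA r]) blast
  have "((Xp \<union> Xm) - {p}) \<union> C = \<rho>" using sub unfolding C_def by blast
  then have "C \<in> link T ((Xp \<union> Xm) - {p})" unfolding link_def using CT r C_def by auto
  then have "C \<in> link T ((Xp \<union> Xm) - {p'})" using l1 l2 by simp
  then show ?thesis unfolding link_def C_def by blast
qed




theorem proposition5p4:
  fixes A :: "((real^'m::finite) \<times> (real^'n::finite)) set"
    and T :: "((real^'m) \<times> (real^'n)) set set"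
    and i j k l :: 'm
    and fij fik fil fjk fjl fkl :: 'n
  assumes "A \<subseteq> prod_simplices"
    and "is_triangulation A T"
    and "distinct [i, j, k, l]"
    and "distinct [fij, fik, fil, fjk, fjl, fkl]"
    and "circ3 j k l fjk fkl fjl \<subseteq> A"
    and "circ3 k i l fik fil fkl \<subseteq> A"
    and "circ3 i j l fij fjl fil \<subseteq> A"
    and "circ3 i j k fij fjk fik \<subseteq> A"
    and "T_plus (circ3_plus j k l fjk fkl fjl) (circ3_minus j k l fjk fkl fjl) \<subseteq> T"
    and "T_plus (circ3_plus k i l fik fil fkl) (circ3_minus k i l fik fil fkl) \<subseteq> T"
    and "circ3 i j l fij fjl fil - {pt i fij} \<in> T"
  shows "\<not> has_flip T (circ3_plus i j k fij fjk fik) (circ3_minus i j k fij fjk fik)"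
proof
  assume hf: "has_flip T (circ3_plus i j k fij fjk fik) (circ3_minus i j k fij fjk fik)"
  note tri = assms(2) and AP = assms(1)
  have fA: "finite A" using finite_subset[OF AP finite_prod_simplices] .
  have nr: "i \<noteq> j" "i \<noteq> k" "i \<noteq> l" "j \<noteq> k" "j \<noteq> l" "k \<noteq> l" using assms(3) by auto
  have nc: "fij \<noteq> fik" "fij \<noteq> fil" "fij \<noteq> fjk" "fij \<noteq> fjl" "fij \<noteq> fkl"
    "fik \<noteq> fil" "fik \<noteq> fjk" "fik \<noteq> fjl" "fik \<noteq> fkl" "fil \<noteq> fjk" "fil \<noteq> fjl" "fil \<noteq> fkl"
    "fjk \<noteq> fjl" "fjk \<noteq> fkl" "fjl \<noteq> fkl" using assms(4) by auto
  note neq = nr nr[symmetric] nc nc[symmetric]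
  let ?Xp = "circ3_plus i j k fij fjk fik" and ?Xm = "circ3_minus i j k fij fjk fik"
  have pk: "pt k fik \<in> ?Xp" and pj: "pt j fjk \<in> ?Xp" and pi: "pt i fij \<in> ?Xp"
    by (simp_all add: circ3_plus_def)
  have TpT: "T_plus ?Xp ?Xm \<subseteq> T" using hf unfolding has_flip_def by blast
  define tau where "tau = (?Xp \<union> ?Xm) - {pt k fik}"
  have tau_eq: "tau = {pt i fij, pt i fik, pt j fij, pt j fjk, pt k fjk}"
    unfolding tau_def circ3_plus_def circ3_minus_def using neq by auto
  have tauT: "tau \<in> T" unfolding tau_def using TpT Tplus_max(1)[OF pk] by blast
  have kA: "{pt k fik, pt i fil, pt i fik, pt l fil, pt k fkl} \<in> T"
  proof -
    have "{pt k fik, pt i fil, pt i fik, pt l fil, pt k fkl} \<in> T_plus (circ3_plus k i l fik fil fkl) (circ3_minus k i l fik fil fkl)"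
      unfolding T_plus_def circ3_plus_def circ3_minus_def using neq by auto
    then show ?thesis using assms(10) by blast
  qed
  have kB: "{pt j fjk, pt k fkl, pt k fjk, pt l fkl, pt j fjl} \<in> T"
  proof -
    have "{pt j fjk, pt k fkl, pt k fjk, pt l fkl, pt j fjl} \<in> T_plus (circ3_plus j k l fjk fkl fjl) (circ3_minus j k l fjk fkl fjl)"
      unfolding T_plus_def circ3_plus_def circ3_minus_def using neq by auto
    then show ?thesis using assms(9) by blast
  qed
  have kD: "{pt k fkl, pt l fjl, pt k fjk, pt l fkl, pt j fjl} \<in> T"
  proof -
    have "{pt k fkl, pt l fjl, pt k fjk, pt l fkl, pt j fjl} \<in> T_plus (circ3_plus j k l fjk fkl fjl) (circ3_minus j k l fjk fkl fjl)"
      unfolding T_plus_def circ3_plus_def circ3_minus_def using neq by auto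
    then show ?thesis using assms(9) by blast
  qed
  have kC: "{pt j fjl, pt l fil, pt j fij, pt l fjl, pt i fil} \<in> T"
  proof -
    have "circ3 i j l fij fjl fil - {pt i fij} = {pt j fjl, pt l fil, pt j fij, pt l fjl, pt i fil}"
      unfolding circ3_def circ3_plus_def circ3_minus_def using neq by auto
    then show ?thesis using assms(11) by simp
  qed
  have wkfkl: "pt k fkl \<in> A" using assms(5) unfolding circ3_def circ3_plus_def by auto
  have wifil: "pt i fil \<in> A" using assms(6) unfolding circ3_def circ3_plus_def by auto
  have wlfil: "pt l fil \<in> A" using assms(6) unfolding circ3_def circ3_minus_def by auto
  have wjfjl: "pt j fjl \<in> A" using assms(5) unfolding circ3_def circ3_minus_def by auto
  have sub0: "(?Xp \<union> ?Xm) - {pt k fik} \<subseteq> \<rho>" if "tau \<subseteq> \<rho>" for \<rho> using that tau_def by simp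
  have flipj: "(?Xp \<union> ?Xm - {pt j fjk}) \<union> (\<rho> - tau) \<in> T" if "\<rho> \<in> T" "tau \<subseteq> \<rho>" for \<rho>
    using flip_transfer[OF tri fA hf pk pj that(1) sub0[OF that(2)]] tau_def by simp
  have flipi: "(?Xp \<union> ?Xm - {pt i fij}) \<union> (\<rho> - tau) \<in> T" if "\<rho> \<in> T" "tau \<subseteq> \<rho>" for \<rho>
    using flip_transfer[OF tri fA hf pk pi that(1) sub0[OF that(2)]] tau_def by simp
  note defs = circ3_plus_def circ3_minus_def
  have S1: "\<exists>\<rho>\<in>T. insert (pt k fkl) tau \<subseteq> \<rho>"
  proof -
    have "\<exists>\<rho>\<in>T. tau \<subseteq> \<rho> \<and> (\<exists>a b. pt a b \<in> \<rho> \<and> a \<in> {i, j, k} \<and> b \<in> {fkl})"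
      by (rule ext_pt[OF tri AP tauT order.refl]) (use wkfkl neq in \<open>auto simp: tau_eq potU_pt\<close>)
    then obtain \<rho> a b where r: "\<rho> \<in> T" "tau \<subseteq> \<rho>" "pt a b \<in> \<rho>" "a \<in> {i, j, k}" "b \<in> {fkl}" by blast
    have tr: "pt i fij \<in> \<rho>" "pt i fik \<in> \<rho>" "pt j fij \<in> \<rho>" "pt j fjk \<in> \<rho>" "pt k fjk \<in> \<rho>"
      using r(2) tau_eq by auto
    consider "a = i" | "a = j" | "a = k" using r(4) by blast
    then show ?thesis
    proof cases
      case 1
      have F: "(?Xp \<union> ?Xm - {pt j fjk}) \<union> (\<rho> - tau) \<in> T" using flipj[OF r(1) r(2)] .
      show ?thesis
      proof (rule conflict4[OF tri AP F kA, of i k fkl fik, THEN FalseE])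
        show "pt i fkl \<in> (?Xp \<union> ?Xm - {pt j fjk}) \<union> (\<rho> - tau)" using r(3,5) 1 neq by (simp add: tau_eq)
      qed (use neq in \<open>simp_all add: defs\<close>)
    next
      case 2
      show ?thesis
        by (rule conflict4[OF tri AP r(1) kB, of j k fkl fjk, THEN FalseE]) (use r(3,5) 2 tr neq in auto)
    next
      case 3
      then show ?thesis using r by auto
    qed
  qed
  have S2: "\<exists>\<rho>\<in>T. insert (pt i fil) (insert (pt k fkl) tau) \<subseteq> \<rho>"
  proof -
    obtain \<rho>0 where r0: "\<rho>0 \<in> T" "insert (pt k fkl) tau \<subseteq> \<rho>0" using S1 by blast
    have "\<exists>\<rho>\<in>T. insert (pt k fkl) tau \<subseteq> \<rho> \<and> (\<exists>a b. pt a b \<in> \<rho> \<and> a \<in> {i, j, k} \<and> b \<in> {fil})"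
      by (rule ext_pt[OF tri AP r0]) (use wifil neq in \<open>auto simp: tau_eq potU_pt\<close>)
    then obtain \<rho> a b where r: "\<rho> \<in> T" "insert (pt k fkl) tau \<subseteq> \<rho>" "pt a b \<in> \<rho>" "a \<in> {i, j, k}" "b \<in> {fil}" by blast
    have tr: "pt i fij \<in> \<rho>" "pt i fik \<in> \<rho>" "pt j fij \<in> \<rho>" "pt j fjk \<in> \<rho>" "pt k fjk \<in> \<rho>" "pt k fkl \<in> \<rho>"
      using r(2) tau_eq by auto
    consider "a = i" | "a = j" | "a = k" using r(4) by blast
    then show ?thesis
    proof cases
      case 1
      then show ?thesis using r by auto
    next
      case 2
      show ?thesis
        by (rule conflict4[OF tri AP r(1) kC, of j i fil fij, THEN FalseE]) (use r(3,5) 2 tr neq in auto)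
    next
      case 3
      show ?thesis
        by (rule conflict4[OF tri AP r(1) kA, of k i fil fik, THEN FalseE]) (use r(3,5) 3 tr neq in auto)
    qed
  qed
  have S3: "\<exists>\<rho>\<in>T. insert (pt l fij) (insert (pt i fil) (insert (pt k fkl) tau)) \<subseteq> \<rho>"
  proof -
    obtain \<rho>0 where r0: "\<rho>0 \<in> T" "insert (pt i fil) (insert (pt k fkl) tau) \<subseteq> \<rho>0" using S2 by blast
    have "\<exists>\<rho>\<in>T. insert (pt i fil) (insert (pt k fkl) tau) \<subseteq> \<rho> \<and>
       (\<exists>a b. pt a b \<in> \<rho> \<and> a \<in> {l} \<and> b \<in> {fij, fik, fil, fjk, fjl, fkl})"
      by (rule ext_pt[OF tri AP r0]) (use wlfil neq in \<open>auto simp: tau_eq potU_pt\<close>)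
    then obtain \<rho> a b where r: "\<rho> \<in> T" "insert (pt i fil) (insert (pt k fkl) tau) \<subseteq> \<rho>" "pt a b \<in> \<rho>"
      "a \<in> {l}" "b \<in> {fij, fik, fil, fjk, fjl, fkl}" by blast
    have tr: "pt i fij \<in> \<rho>" "pt i fik \<in> \<rho>" "pt j fij \<in> \<rho>" "pt j fjk \<in> \<rho>" "pt k fjk \<in> \<rho>" "pt k fkl \<in> \<rho>"
      "pt i fil \<in> \<rho>" "tau \<subseteq> \<rho>"
      using r(2) tau_eq by auto
    have al: "a = l" using r(4) by simp
    consider "b = fij" | "b = fik" | "b = fil" | "b = fjk" | "b = fjl" | "b = fkl" using r(5) by blast
    then show ?thesis
    proof cases
      case 1
      then show ?thesis using r al by auto
    next
      case 2
      show ?thesis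
        by (rule conflict4[OF tri AP r(1) kA, of l i fik fil, THEN FalseE]) (use r(3) al 2 tr neq in auto)
    next
      case 3
      have r0': "insert (pt l fil) (insert (pt i fil) (insert (pt k fkl) tau)) \<subseteq> \<rho>" using r(2,3) al 3 by auto
      have "\<exists>\<rho>'\<in>T. insert (pt l fil) (insert (pt i fil) (insert (pt k fkl) tau)) \<subseteq> \<rho>' \<and>
         (\<exists>a b. pt a b \<in> \<rho>' \<and> a \<in> {i, j, k, l} \<and> b \<in> {fjl})"
        by (rule ext_pt[OF tri AP r(1) r0']) (use wjfjl neq in \<open>auto simp: tau_eq potU_pt\<close>)
      then obtain \<rho>' a' b' where s: "\<rho>' \<in> T" "insert (pt l fil) (insert (pt i fil) (insert (pt k fkl) tau)) \<subseteq> \<rho>'"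
        "pt a' b' \<in> \<rho>'" "a' \<in> {i, j, k, l}" "b' \<in> {fjl}" by blast
      have sr: "pt i fij \<in> \<rho>'" "pt i fik \<in> \<rho>'" "pt j fij \<in> \<rho>'" "pt j fjk \<in> \<rho>'" "pt k fjk \<in> \<rho>'" "pt k fkl \<in> \<rho>'"
        "pt i fil \<in> \<rho>'" "pt l fil \<in> \<rho>'"
        using s(2) tau_eq by auto
      have bb: "b' = fjl" using s(5) by simp
      consider "a' = i" | "a' = j" | "a' = k" | "a' = l" using s(4) by blast
      then show ?thesis
      proof cases
        case 1
        show ?thesis
          by (rule conflict4[OF tri AP s(1) kC, of i l fjl fil, THEN FalseE]) (use s(3) bb 1 sr neq in auto)
      next
        case 2
        show ?thesis
          by (rule conflict6[OF tri AP s(1) kC, of j l i fjl fil fij, THEN FalseE]) (use s(3) bb 2 sr neq in auto)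
      next
        case 3
        show ?thesis
          by (rule conflict4[OF tri AP s(1) kD, of k j fjl fjk, THEN FalseE]) (use s(3) bb 3 sr neq in auto)
      next
        case 4
        show ?thesis
          by (rule conflict6[OF tri AP s(1) kD, of k l j fkl fjl fjk, THEN FalseE]) (use s(3) bb 4 sr neq in auto)
      qed
    next
      case 4
      show ?thesis
        by (rule conflict4[OF tri AP r(1) kD, of l k fjk fkl, THEN FalseE]) (use r(3) al 4 tr neq in auto)
    next
      case 5
      show ?thesis
        by (rule conflict6[OF tri AP r(1) kD, of k l j fkl fjl fjk, THEN FalseE]) (use r(3) al 5 tr neq in auto)
    next
      case 6
      have F: "(?Xp \<union> ?Xm - {pt i fij}) \<union> (\<rho> - tau) \<in> T" using flipi[OF r(1) tr(8)] .
      show ?thesis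
      proof (rule conflict6[OF tri AP F kA, of i l k fil fkl fik, THEN FalseE])
        show "pt i fil \<in> (?Xp \<union> ?Xm - {pt i fij}) \<union> (\<rho> - tau)" using tr neq by (simp add: tau_eq)
        show "pt l fkl \<in> (?Xp \<union> ?Xm - {pt i fij}) \<union> (\<rho> - tau)" using r(3) al 6 neq by (simp add: tau_eq)
      qed (use neq in \<open>simp_all add: defs\<close>)
    qed
  qed
  have S4: "\<exists>\<rho>\<in>T. insert (pt i fjl) (insert (pt l fij) (insert (pt i fil) (insert (pt k fkl) tau))) \<subseteq> \<rho>"
  proof -
    obtain \<rho>0 where r0: "\<rho>0 \<in> T" "insert (pt l fij) (insert (pt i fil) (insert (pt k fkl) tau)) \<subseteq> \<rho>0" using S3 by blast
    have "\<exists>\<rho>\<in>T. insert (pt l fij) (insert (pt i fil) (insert (pt k fkl) tau)) \<subseteq> \<rho> \<and>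
       (\<exists>a b. pt a b \<in> \<rho> \<and> a \<in> {i, j, k, l} \<and> b \<in> {fjl})"
      by (rule ext_pt[OF tri AP r0]) (use wjfjl neq in \<open>auto simp: tau_eq potU_pt\<close>)
    then obtain \<rho> a b where r: "\<rho> \<in> T" "insert (pt l fij) (insert (pt i fil) (insert (pt k fkl) tau)) \<subseteq> \<rho>"
      "pt a b \<in> \<rho>" "a \<in> {i, j, k, l}" "b \<in> {fjl}" by blast
    have tr: "pt i fij \<in> \<rho>" "pt i fik \<in> \<rho>" "pt j fij \<in> \<rho>" "pt j fjk \<in> \<rho>" "pt k fjk \<in> \<rho>" "pt k fkl \<in> \<rho>"
      "pt i fil \<in> \<rho>" "pt l fij \<in> \<rho>"
      using r(2) tau_eq by auto
    have bb: "b = fjl" using r(5) by simp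
    consider "a = i" | "a = j" | "a = k" | "a = l" using r(4) by blast
    then show ?thesis
    proof cases
      case 1
      then show ?thesis using r bb by auto
    next
      case 2
      show ?thesis
        by (rule conflict4[OF tri AP r(1) kC, of j l fjl fij, THEN FalseE]) (use r(3) bb 2 tr neq in auto)
    next
      case 3
      show ?thesis
        by (rule conflict4[OF tri AP r(1) kD, of k j fjl fjk, THEN FalseE]) (use r(3) bb 3 tr neq in auto)
    next
      case 4
      show ?thesis
        by (rule conflict6[OF tri AP r(1) kD, of k l j fkl fjl fjk, THEN FalseE]) (use r(3) bb 4 tr neq in auto)
    qed
  qed
  obtain \<rho>5 where r5: "\<rho>5 \<in> T" "insert (pt i fjl) (insert (pt l fij) (insert (pt i fil) (insert (pt k fkl) tau))) \<subseteq> \<rho>5"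
    using S4 by blast
  have t5: "tau \<subseteq> \<rho>5" using r5(2) by blast
  have F5: "(?Xp \<union> ?Xm - {pt i fij}) \<union> (\<rho>5 - tau) \<in> T" using flipi[OF r5(1) t5] .
  have sF: "{pt i fik, pt i fil, pt i fjl, pt j fjk, pt k fik, pt k fjk, pt k fkl, pt l fij} \<subseteq> (?Xp \<union> ?Xm - {pt i fij}) \<union> (\<rho>5 - tau)"
    using r5(2) neq by (auto simp: tau_eq defs)
  have "\<exists>\<rho>\<in>T. {pt i fik, pt i fil, pt i fjl, pt j fjk, pt k fik, pt k fjk, pt k fkl, pt l fij} \<subseteq> \<rho> \<and>
     (\<exists>a b. pt a b \<in> \<rho> \<and> a \<in> {l} \<and> b \<in> {fik, fil, fjk, fjl, fkl})"
    by (rule ext_pt[OF tri AP F5 sF]) (use wlfil neq in \<open>auto simp: potU_pt\<close>)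
  then obtain \<rho> a b where r: "\<rho> \<in> T" "{pt i fik, pt i fil, pt i fjl, pt j fjk, pt k fik, pt k fjk, pt k fkl, pt l fij} \<subseteq> \<rho>"
    "pt a b \<in> \<rho>" "a \<in> {l}" "b \<in> {fik, fil, fjk, fjl, fkl}" by blast
  have tr: "pt i fik \<in> \<rho>" "pt i fil \<in> \<rho>" "pt i fjl \<in> \<rho>" "pt j fjk \<in> \<rho>" "pt k fik \<in> \<rho>" "pt k fjk \<in> \<rho>"
    "pt k fkl \<in> \<rho>" "pt l fij \<in> \<rho>" using r(2) by auto
  have al: "a = l" using r(4) by simp
  consider "b = fik" | "b = fil" | "b = fjk" | "b = fjl" | "b = fkl" using r(5) by blast
  then show False
  proof cases
    case 1
    show False by (rule conflict4[OF tri AP r(1) kA, of l i fik fil]) (use r(3) al 1 tr neq in auto)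
  next
    case 2
    show False by (rule conflict4[OF tri AP r(1) kC, of l i fil fjl]) (use r(3) al 2 tr neq in auto)
  next
    case 3
    show False by (rule conflict4[OF tri AP r(1) kD, of l k fjk fkl]) (use r(3) al 3 tr neq in auto)
  next
    case 4
    show False by (rule conflict6[OF tri AP r(1) kD, of k l j fkl fjl fjk]) (use r(3) al 4 tr neq in auto)
  next
    case 5
    show False by (rule conflict6[OF tri AP r(1) kA, of i l k fil fkl fik]) (use r(3) al 5 tr neq in auto)
  qed
qed


end
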